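(* Let $E$ be a nonempty closed convex subset of a real Hilbert space $H$. Let $f:E\times E\to\mathbb{R}$ be a bifunction satisfying conditions (A1)–(A4) below, and let $S:E\to E$ be a hybrid mapping with $F(S)\cap EP(f)\neq\emptyset$. Let $\{\alpha_n\}$ satisfy $0<\alpha\le\alpha_n\le 1$ for all $n$ (for some constant $\alpha>0$), let $\{r_n\}\subset(0,\infty)$ satisfy $\liminf_{n\to\infty}r_n>0$, and let $\{\beta_n\}$ be a sequence in $[b,1]$ for some $b\in(0,1)$ with $\liminf_{n\to\infty}\beta_n(1-\beta_n)>0$. Let $\{x_n\}$ and $\{u_n\}$ be generated by $x_1=x\in E$ and, for all $n\in\mathbb{N}$, $$u_n\in E \text{ such that } f(u_n,y)+\frac{1}{r_n}\langle y-u_n,u_n-x_n\rangle\ge 0\quad\text{for all } y\in E,$$ $$y_n=(1-\beta_n)x_n+\beta_n Su_n,\qquad x_{n+1}=(1-\alpha_n)x_n+\alpha_n Sy_n.$$ Then $\{x_n\}$ converges weakly to a point $v\in F(S)\cap EP(f)$, where $v=\lim_{n\to\infty}P_{F(S)\cap EP(f)}(x_n)$.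
   Context: $F(S)=\{x\in E: Sx=x\}$. A mapping $S:E\to E$ is hybrid if $3\|Sx-Sy\|^2\le \|x-y\|^2+\|Sx-y\|^2+\|Sy-x\|^2$ for all $x,y\in E$. $EP(f)=\{x\in E: f(x,y)\ge 0 \text{ for all } y\in E\}$. Conditions: (A1) $f(x,x)=0$ for all $x\in E$; (A2) $f(x,y)+f(y,x)\le 0$ for all $x,y\in E$; (A3) for all $x,y,z\in E$, $\lim_{t\downarrow 0} f(tz+(1-t)x,y)\le f(x,y)$; (A4) for each $x\in E$, $y\mapsto f(x,y)$ is convex and lower semicontinuous. $P_K$ is the metric projection of $H$ onto a nonempty closed convex set $K$; the limit defining $v$ is in norm. *)

theory Defs
  imports "HOL-Analysis.Analysis"
begin

definition fixset :: "'a set \<Rightarrow> ('a \<Rightarrow> 'a) \<Rightarrow> 'a set" where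
  "fixset E S = {x \<in> E. S x = x}"

definition EP :: "'a set \<Rightarrow> ('a \<Rightarrow> 'a \<Rightarrow> real) \<Rightarrow> 'a set" where
  "EP E f = {x \<in> E. \<forall>y\<in>E. f x y \<ge> 0}"

definition hybrid :: "'a::real_inner set \<Rightarrow> ('a \<Rightarrow> 'a) \<Rightarrow> bool" where
  "hybrid E S \<longleftrightarrow> S ` E \<subseteq> E \<and>
     (\<forall>x\<in>E. \<forall>y\<in>E. 3 * (norm (S x - S y))\<^sup>2 \<le>
        (norm (x - y))\<^sup>2 + (norm (S x - y))\<^sup>2 + (norm (S y - x))\<^sup>2)"

definition lsc_on :: "'a::topological_space set \<Rightarrow> ('a \<Rightarrow> real) \<Rightarrow> bool" where
  "lsc_on E g \<longleftrightarrow> (\<forall>x\<in>E. \<forall>a. a < g x \<longrightarrow> (\<forall>\<^sub>F y in at x within E. a < g y))"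

definition bifun_conds :: "'a::real_inner set \<Rightarrow> ('a \<Rightarrow> 'a \<Rightarrow> real) \<Rightarrow> bool" where
  "bifun_conds E f \<longleftrightarrow>
     (\<forall>x\<in>E. f x x = 0) \<and>
     (\<forall>x\<in>E. \<forall>y\<in>E. f x y + f y x \<le> 0) \<and>
     (\<forall>x\<in>E. \<forall>y\<in>E. \<forall>z\<in>E.
        Limsup (at_right 0) (\<lambda>t. ereal (f (t *\<^sub>R z + (1 - t) *\<^sub>R x) y)) \<le> ereal (f x y)) \<and>
     (\<forall>x\<in>E. convex_on E (f x) \<and> lsc_on E (f x))"

definition weakly_conv :: "(nat \<Rightarrow> 'a::real_inner) \<Rightarrow> 'a \<Rightarrow> bool" where
  "weakly_conv x v \<longleftrightarrow> (\<forall>w. ((\<lambda>n. x n \<bullet> w) \<longlongrightarrow> v \<bullet> w) sequentially)"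

text \<open>Metric projection onto K (unique nearest point; K nonempty closed convex).\<close>
definition metric_proj :: "'a::real_normed_vector set \<Rightarrow> 'a \<Rightarrow> 'a" where
  "metric_proj K x = (THE p. p \<in> K \<and> (\<forall>z\<in>K. norm (x - p) \<le> norm (x - z)))"

end

theory Submission
  imports Defs
begin


lemma aux_ineq1: "(m::real) \<le> (a + b) / 2 - n / 4 \<Longrightarrow> a < m + x \<Longrightarrow> b < m + y \<Longrightarrow> n \<le> 2 * x + 2 * y" 
  by (simp add: field_simps)

lemma strongly_convex_min:
  fixes K :: "'a::{real_inner,complete_space} set" and \<phi> :: "'a \<Rightarrow> real"
  assumes K: "closed K" "convex K" "K \<noteq> {}"
    and lb: "\<forall>z\<in>K. \<phi> z \<ge> 0"
    and mid: "\<forall>a\<in>K. \<forall>b\<in>K. \<phi> ((1/2) *\<^sub>R (a+b)) \<le> (\<phi> a + \<phi> b)/2 - (norm (a-b))\<^sup>2 / 4"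
    and cont: "\<forall>a\<in>K. \<forall>b\<in>K. \<phi> a \<le> \<phi> b + norm (a-b) * (L + norm a + norm b)"
  shows "\<exists>c\<in>K. \<forall>z\<in>K. \<phi> c \<le> \<phi> z"
proof -
  define m where "m = Inf (\<phi> ` K)"
  have bdd: "bdd_below (\<phi> ` K)" using lb by (auto intro: bdd_belowI2)
  have mle: "\<And>z. z \<in> K \<Longrightarrow> m \<le> \<phi> z" unfolding m_def using bdd by (simp add: cInf_lower)
  have "\<forall>j. \<exists>z\<in>K. \<phi> z < m + inverse (real (Suc j))"
  proof
    fix j
    have "Inf (\<phi> ` K) < m + inverse (real (Suc j))" unfolding m_def by simp
    then obtain w where "w \<in> \<phi> ` K" "w < m + inverse (real (Suc j))"
      using cInf_lessD[of "\<phi> ` K"] K(3) by blast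
    then show "\<exists>z\<in>K. \<phi> z < m + inverse (real (Suc j))" by auto
  qed
  then obtain z where zK: "\<And>j. z j \<in> K" and zl: "\<And>j. \<phi> (z j) < m + inverse (real (Suc j))"
    by metis
  have dz: "(norm (z i - z j))\<^sup>2 \<le> 2 * inverse (real (Suc i)) + 2 * inverse (real (Suc j))" for i j
  proof -
    have "(1/2) *\<^sub>R (z i + z j) \<in> K"
      using convexD[OF K(2) zK[of i] zK[of j], of "1/2" "1/2"] by (simp add: scaleR_add_right)
    then have "m \<le> \<phi> ((1/2) *\<^sub>R (z i + z j))" by (rule mle)
    also have "\<dots> \<le> (\<phi> (z i) + \<phi> (z j))/2 - (norm (z i - z j))\<^sup>2 / 4" using mid zK by blast
    finally show ?thesis using zl[of i] zl[of j] by (rule aux_ineq1)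
  qed
  have "Cauchy z"
  proof (rule metric_CauchyI)
    fix e :: real assume e: "e > 0"
    obtain N where N: "inverse (real (Suc N)) < e\<^sup>2 / 4"
      using reals_Archimedean[of "e\<^sup>2/4"] e by auto
    show "\<exists>M. \<forall>i\<ge>M. \<forall>j\<ge>M. dist (z i) (z j) < e"
    proof (intro exI allI impI)
      fix i j assume ij: "N \<le> i" "N \<le> j"
      have "inverse (real (Suc i)) \<le> inverse (real (Suc N))" "inverse (real (Suc j)) \<le> inverse (real (Suc N))"
        using ij by (auto simp: field_simps)
      then have "(norm (z i - z j))\<^sup>2 < e\<^sup>2" using dz[of i j] N by linarith
      then have "norm (z i - z j) < e" using e by (simp add: power_less_imp_less_base)
      then show "dist (z i) (z j) < e" by (simp add: dist_norm)
    qed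
  qed
  then obtain c where zc: "z \<longlonglongrightarrow> c" using Cauchy_convergent_iff convergent_def by blast
  have cK: "c \<in> K" using K(1) zK zc closed_sequential_limits by blast
  have phim: "(\<lambda>j. \<phi> (z j)) \<longlonglongrightarrow> m"
  proof (rule real_tendsto_sandwich[where f="\<lambda>j. m" and h="\<lambda>j. m + inverse (real (Suc j))"])
    show "\<forall>\<^sub>F n in sequentially. m \<le> \<phi> (z n)" using mle zK by auto
    show "\<forall>\<^sub>F n in sequentially. \<phi> (z n) \<le> m + inverse (real (Suc n))" using zl by (simp add: less_imp_le)
    show "(\<lambda>j. m) \<longlonglongrightarrow> m" by simp
    show "(\<lambda>j. m + inverse (real (Suc j))) \<longlonglongrightarrow> m"
      using tendsto_add[OF tendsto_const LIMSEQ_inverse_real_of_nat, of m] by simp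
  qed
  have "(\<lambda>j. \<phi> (z j) + norm (c - z j) * (L + norm c + norm (z j))) \<longlonglongrightarrow> m + norm (c - c) * (L + norm c + norm c)"
    by (intro tendsto_intros phim zc)
  then have lim2: "(\<lambda>j. \<phi> (z j) + norm (c - z j) * (L + norm c + norm (z j))) \<longlonglongrightarrow> m" by simp
  have "\<phi> c \<le> m"
    by (rule tendsto_lowerbound[OF lim2]) (use cont cK zK in auto)
  then show ?thesis using cK mle by force
qed

lemma midpoint_id:
  fixes s a b :: "'a::real_inner"
  shows "(norm (s - (1/2) *\<^sub>R (a+b)))\<^sup>2 = (norm (s-a))\<^sup>2/2 + (norm (s-b))\<^sup>2/2 - (norm (a-b))\<^sup>2/4"
proof -
  have "(norm (s - (1/2) *\<^sub>R (a+b)))\<^sup>2 = s\<bullet>s - s \<bullet> a - s \<bullet> b + (a\<bullet>a + 2 * (a\<bullet>b) + b\<bullet>b)/4"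
    by (simp add: power2_norm_eq_inner inner_diff_left inner_diff_right inner_add_left inner_add_right
      inner_commute algebra_simps)
  moreover have "(norm (s-a))\<^sup>2 = s\<bullet>s - 2*(s\<bullet>a) + a\<bullet>a" "(norm (s-b))\<^sup>2 = s\<bullet>s - 2*(s\<bullet>b) + b\<bullet>b"
    "(norm (a-b))\<^sup>2 = a\<bullet>a - 2*(a\<bullet>b) + b\<bullet>b"
    by (simp_all add: power2_norm_eq_inner inner_diff_left inner_diff_right inner_commute)
  ultimately show ?thesis by (simp add: field_simps)
qed

lemma sq_expand:
  fixes a b :: "'a::real_inner"
  shows "(norm (a + b))\<^sup>2 = (norm a)\<^sup>2 + (norm b)\<^sup>2 + 2 * (a \<bullet> b)"
  by (simp add: power2_norm_eq_inner inner_add_left inner_add_right inner_commute)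

lemma sq_lip:
  fixes s a b :: "'a::real_inner"
  shows "(norm (s-a))\<^sup>2 \<le> (norm (s-b))\<^sup>2 + norm (a-b) * (2*norm s + norm a + norm b)"
proof -
  have "(norm (s-a))\<^sup>2 - (norm (s-b))\<^sup>2 = (b - a) \<bullet> (2 *\<^sub>R s - a - b)"
    by (simp add: power2_norm_eq_inner inner_diff_left inner_diff_right inner_commute algebra_simps)
  also have "\<dots> \<le> norm (b - a) * norm (2 *\<^sub>R s - a - b)" by (rule norm_cauchy_schwarz)
  also have "norm (2 *\<^sub>R s - a - b) \<le> 2*norm s + norm a + norm b"
  proof -
    have "norm (2 *\<^sub>R s - a - b) \<le> norm (2 *\<^sub>R s - a) + norm b" by (rule norm_triangle_ineq4)
    moreover have "norm (2 *\<^sub>R s - a) \<le> norm (2 *\<^sub>R s) + norm a" by (rule norm_triangle_ineq4)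
    ultimately show ?thesis by simp
  qed
  then have "norm (b - a) * norm (2 *\<^sub>R s - a - b) \<le> norm (a - b) * (2*norm s + norm a + norm b)"
    by (simp add: norm_minus_commute mult_left_mono)
  finally show ?thesis by simp
qed

lemma mid_in:
  assumes "convex K" "a \<in> K" "b \<in> K"
  shows "(1/2) *\<^sub>R (a+b) \<in> K"
  using convexD[OF assms, of "1/2" "1/2"] by (simp add: scaleR_add_right)

lemma proj_exists:
  fixes K :: "'a::{real_inner,complete_space} set"
  assumes K: "closed K" "convex K" "K \<noteq> {}"
  shows "\<exists>p\<in>K. \<forall>z\<in>K. norm (x - p) \<le> norm (x - z)"
proof -
  have "\<exists>c\<in>K. \<forall>z\<in>K. (norm (x - c))\<^sup>2 \<le> (norm (x - z))\<^sup>2"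
    by (rule strongly_convex_min[OF K, where L="2 * norm x"])
       (simp_all add: midpoint_id sq_lip)
  then show ?thesis by (meson norm_ge_zero power2_le_imp_le)
qed

lemma proj_unique:
  fixes K :: "'a::{real_inner} set"
  assumes K: "convex K" and p: "p \<in> K" "\<forall>z\<in>K. norm (x - p) \<le> norm (x - z)"
    and q: "q \<in> K" "\<forall>z\<in>K. norm (x - q) \<le> norm (x - z)"
  shows "p = q"
proof -
  have e: "norm (x - p) = norm (x - q)" using p q by (meson antisym)
  have "norm (x - p) \<le> norm (x - (1/2) *\<^sub>R (p+q))" using p(2) mid_in[OF K p(1) q(1)] by blast
  then have "(norm (x - p))\<^sup>2 \<le> (norm (x - (1/2) *\<^sub>R (p+q)))\<^sup>2" by (simp add: power_mono)
  then have "(norm (p - q))\<^sup>2 \<le> 0" unfolding midpoint_id e by simp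
  then show ?thesis by simp
qed

lemma metric_proj_props:
  fixes K :: "'a::{real_inner,complete_space} set"
  assumes K: "closed K" "convex K" "K \<noteq> {}"
  shows "metric_proj K x \<in> K" "\<And>z. z \<in> K \<Longrightarrow> norm (x - metric_proj K x) \<le> norm (x - z)"
proof -
  obtain p where p: "p \<in> K" "\<forall>z\<in>K. norm (x - p) \<le> norm (x - z)" using proj_exists[OF K] by blast
  have "metric_proj K x = p" unfolding metric_proj_def
    by (rule the_equality) (use p proj_unique[OF K(2)] in blast)+
  then show "metric_proj K x \<in> K" "\<And>z. z \<in> K \<Longrightarrow> norm (x - metric_proj K x) \<le> norm (x - z)"
    using p by auto
qed

lemma small_pos_contra:
  fixes d n :: real
  assumes "n \<ge> 0" "\<And>t. 0 < t \<Longrightarrow> t \<le> 1 \<Longrightarrow> 2 * d \<le> t * n"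
  shows "d \<le> 0"
proof (rule ccontr)
  assume "\<not> d \<le> 0"
  then have d: "d > 0" by simp
  define t where "t = min 1 (d / (n + 1))"
  have t: "0 < t" "t \<le> 1" using d assms(1) by (auto simp: t_def)
  have "t * n \<le> d / (n+1) * n" using t assms(1) by (intro mult_right_mono) (auto simp: t_def)
  also have "\<dots> < d" using d assms(1) by (simp add: field_simps)
  finally show False using assms(2)[OF t] d by linarith
qed

lemma proj_char:
  fixes K :: "'a::{real_inner} set"
  assumes K: "convex K" and p: "p \<in> K" "\<forall>z\<in>K. norm (x - p) \<le> norm (x - z)" and z: "z \<in> K"
  shows "(x - p) \<bullet> (z - p) \<le> 0"
proof (rule small_pos_contra[where n="(norm (z-p))\<^sup>2"])
  fix t :: real assume t: "0 < t" "t \<le> 1"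
  have "(1 - t) *\<^sub>R p + t *\<^sub>R z \<in> K" using convexD[OF K p(1) z, of "1-t" t] t by simp
  then have "norm (x - p) \<le> norm (x - ((1 - t) *\<^sub>R p + t *\<^sub>R z))" using p(2) by blast
  then have "(norm (x - p))\<^sup>2 \<le> (norm ((x - p) + (- t *\<^sub>R (z - p))))\<^sup>2"
    by (simp add: power_mono algebra_simps)
  also have "\<dots> = (norm (x-p))\<^sup>2 + t\<^sup>2 * (norm (z-p))\<^sup>2 - 2 * t * ((x - p) \<bullet> (z - p))"
    unfolding sq_expand by (simp add: power_mult_distrib)
  finally have "2 * t * ((x - p) \<bullet> (z - p)) \<le> t * (t * (norm (z-p))\<^sup>2)"
    by (simp add: power2_eq_square algebra_simps)
  then show "2 * ((x - p) \<bullet> (z - p)) \<le> t * (norm (z-p))\<^sup>2" using t by (simp add: mult.assoc)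
qed simp

lemma proj_pyth:
  fixes K :: "'a::{real_inner} set"
  assumes K: "convex K" and p: "p \<in> K" "\<forall>z\<in>K. norm (x - p) \<le> norm (x - z)" and z: "z \<in> K"
  shows "(norm (z - p))\<^sup>2 + (norm (x - p))\<^sup>2 \<le> (norm (z - x))\<^sup>2"
proof -
  have "(norm (z - x))\<^sup>2 = (norm ((z - p) + (p - x)))\<^sup>2" by simp
  also have "\<dots> = (norm (z-p))\<^sup>2 + (norm (p-x))\<^sup>2 + 2 * ((z-p) \<bullet> (p-x))" by (rule sq_expand)
  finally show ?thesis using proj_char[OF assms]
    by (simp add: norm_minus_commute inner_commute inner_diff_right inner_diff_left algebra_simps)
qed




definition LS :: "(nat \<Rightarrow> real) \<Rightarrow> real" where
  "LS a = real_of_ereal (limsup (\<lambda>n. ereal (a n)))"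

definition bdd :: "(nat \<Rightarrow> real) \<Rightarrow> bool" where
  "bdd a \<longleftrightarrow> (\<exists>B. \<forall>n. \<bar>a n\<bar> \<le> B)"

lemma LS_fin:
  assumes "bdd a"
  shows "limsup (\<lambda>n. ereal (a n)) = ereal (LS a)"
proof -
  obtain B where B: "\<And>n. \<bar>a n\<bar> \<le> B" using assms unfolding bdd_def by blast
  have B1: "\<And>n. a n \<le> B" "\<And>n. -B \<le> a n" using B by (auto simp: abs_le_iff minus_le_iff)
  have "limsup (\<lambda>n. ereal (a n)) \<le> ereal B"
    by (rule Limsup_bounded) (simp add: B1)
  moreover have "ereal (-B) \<le> limsup (\<lambda>n. ereal (a n))"
    by (rule le_Limsup) (simp_all add: B1)
  ultimately have "\<bar>limsup (\<lambda>n. ereal (a n))\<bar> \<noteq> \<infinity>" by auto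
  then show ?thesis unfolding LS_def by (simp add: ereal_real')
qed

lemma bdd_add: "bdd a \<Longrightarrow> bdd b \<Longrightarrow> bdd (\<lambda>n. a n + b n)"
  unfolding bdd_def by (metis (no_types, lifting) abs_triangle_ineq add_mono order_trans)

lemma bdd_conv: "a \<longlonglongrightarrow> l \<Longrightarrow> bdd a"
  unfolding bdd_def using convergent_imp_Bseq[of a] unfolding convergent_def Bseq_def by force

lemma LS_le:
  assumes "bdd a" "bdd b" "eventually (\<lambda>n. a n \<le> b n + g n) sequentially" "g \<longlonglongrightarrow> 0"
  shows "LS a \<le> LS b"
proof -
  have "limsup (\<lambda>n. ereal (a n)) \<le> limsup (\<lambda>n. ereal (g n) + ereal (b n))"
    by (rule Limsup_mono) (use assms(3) in \<open>auto elim: eventually_mono simp: add.commute\<close>)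
  also have "\<dots> = ereal 0 + limsup (\<lambda>n. ereal (b n))"
    by (rule ereal_limsup_lim_add) (use assms(4) in \<open>auto simp: lim_ereal\<close>)
  finally show ?thesis using LS_fin[OF assms(1)] LS_fin[OF assms(2)] by simp
qed

lemma LS_mono:
  assumes "bdd a" "bdd b" "eventually (\<lambda>n. a n \<le> b n) sequentially"
  shows "LS a \<le> LS b"
  by (rule LS_le[OF assms(1,2), where g="\<lambda>n. 0"]) (use assms(3) in auto)

lemma LS_add_le:
  assumes "bdd a" "bdd b"
  shows "LS (\<lambda>n. a n + b n) \<le> LS a + LS b"
proof -
  have "limsup (\<lambda>n. ereal (a n + b n)) = limsup (\<lambda>n. ereal (a n) + ereal (b n))" by simp
  also have "\<dots> \<le> limsup (\<lambda>n. ereal (a n)) + limsup (\<lambda>n. ereal (b n))" by (rule ereal_limsup_add_mono)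
  finally show ?thesis using LS_fin[OF assms(1)] LS_fin[OF assms(2)] LS_fin[OF bdd_add[OF assms]] by simp
qed

lemma LS_lim_add:
  assumes "bdd a" "b \<longlonglongrightarrow> l"
  shows "LS (\<lambda>n. b n + a n) = l + LS a"
proof -
  have "limsup (\<lambda>n. ereal (b n + a n)) = limsup (\<lambda>n. ereal (b n) + ereal (a n))" by simp
  also have "\<dots> = ereal l + limsup (\<lambda>n. ereal (a n))"
    by (rule ereal_limsup_lim_add) (use assms(2) in \<open>auto simp: lim_ereal\<close>)
  finally show ?thesis using LS_fin[OF assms(1)] LS_fin[OF bdd_add[OF bdd_conv[OF assms(2)] assms(1)]]
    by simp
qed

lemma LS_cmult:
  assumes "bdd a" "c \<ge> 0"
  shows "LS (\<lambda>n. c * a n) = c * LS a"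
proof -
  have "limsup (\<lambda>n. ereal (c * a n)) = limsup (\<lambda>n. ereal c * ereal (a n))" by simp
  also have "\<dots> = ereal c * limsup (\<lambda>n. ereal (a n))" by (rule limsup_ereal_mult_left) fact
  finally show ?thesis unfolding LS_def using LS_fin[OF assms(1)] by simp
qed

lemma LS_lim:
  assumes "a \<longlonglongrightarrow> l"
  shows "LS a = l"
proof -
  have "limsup (\<lambda>n. ereal (a n)) = ereal l"
    by (rule lim_imp_Limsup) (use assms in \<open>auto simp: lim_ereal\<close>)
  then show ?thesis unfolding LS_def by simp
qed




definition psi :: "(nat \<Rightarrow> 'a::real_inner) \<Rightarrow> 'a \<Rightarrow> real" where
  "psi s z = LS (\<lambda>n. (norm (s n - z))\<^sup>2)"

definition bseqv :: "(nat \<Rightarrow> 'a::real_normed_vector) \<Rightarrow> real \<Rightarrow> bool" where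
  "bseqv s M \<longleftrightarrow> (\<forall>n. norm (s n) \<le> M)"

lemma bdd_sq:
  assumes "bseqv s M"
  shows "bdd (\<lambda>n. (norm (s n - z))\<^sup>2)"
proof -
  have "\<bar>(norm (s n - z))\<^sup>2\<bar> \<le> (M + norm z)\<^sup>2" for n
  proof -
    have "norm (s n - z) \<le> M + norm z" using assms norm_triangle_ineq4[of "s n" z] unfolding bseqv_def
      by (metis add_right_mono order_trans)
    then show ?thesis by (simp add: power_mono)
  qed
  then show ?thesis unfolding bdd_def by blast
qed

lemma bdd_const: "bdd (\<lambda>n. c)" unfolding bdd_def by blast

lemma psi_nonneg:
  assumes "bseqv s M"
  shows "psi s z \<ge> 0"
proof -
  have "LS (\<lambda>n. 0) \<le> psi s z" unfolding psi_def
    by (rule LS_mono[OF bdd_const bdd_sq[OF assms]]) simp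
  then show ?thesis using LS_lim[of "\<lambda>n. 0" 0] by simp
qed

lemma bdd_cmult: "bdd a \<Longrightarrow> bdd (\<lambda>n. c * a n)"
  unfolding bdd_def by (metis abs_mult mult_left_mono abs_ge_zero)

lemma psi_mid:
  assumes "bseqv s M"
  shows "psi s ((1/2) *\<^sub>R (a+b)) \<le> (psi s a + psi s b)/2 - (norm (a-b))\<^sup>2 / 4"
proof -
  have e: "(\<lambda>n. (norm (s n - (1/2) *\<^sub>R (a+b)))\<^sup>2) =
      (\<lambda>n. (- (norm (a-b))\<^sup>2/4) + ((1/2) * (norm (s n - a))\<^sup>2 + (1/2) * (norm (s n - b))\<^sup>2))"
    by (simp add: midpoint_id)
  have ba: "bdd (\<lambda>n. (1/2) * (norm (s n - a))\<^sup>2)" "bdd (\<lambda>n. (1/2) * (norm (s n - b))\<^sup>2)"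
    by (intro bdd_cmult bdd_sq[OF assms])+
  have "psi s ((1/2) *\<^sub>R (a+b)) = (- (norm (a-b))\<^sup>2/4) + LS (\<lambda>n. (1/2) * (norm (s n - a))\<^sup>2 + (1/2) * (norm (s n - b))\<^sup>2)"
    unfolding psi_def e by (rule LS_lim_add) (use bdd_add[OF ba] in auto)
  also have "LS (\<lambda>n. (1/2) * (norm (s n - a))\<^sup>2 + (1/2) * (norm (s n - b))\<^sup>2)
     \<le> LS (\<lambda>n. (1/2) * (norm (s n - a))\<^sup>2) + LS (\<lambda>n. (1/2) * (norm (s n - b))\<^sup>2)"
    by (rule LS_add_le[OF ba])
  also have "\<dots> = (psi s a + psi s b)/2" unfolding psi_def
    using LS_cmult[OF bdd_sq[OF assms, of a], of "1/2"] LS_cmult[OF bdd_sq[OF assms, of b], of "1/2"]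
    by simp
  finally show ?thesis by simp
qed

lemma psi_cont:
  assumes "bseqv s M"
  shows "psi s a \<le> psi s b + norm (a-b) * (2*M + norm a + norm b)"
proof -
  have "psi s a \<le> LS (\<lambda>n. norm (a-b) * (2*M + norm a + norm b) + (norm (s n - b))\<^sup>2)" unfolding psi_def
  proof (rule LS_mono[OF bdd_sq[OF assms] bdd_add[OF bdd_const bdd_sq[OF assms]]], rule always_eventually, rule allI)
    fix n
    have "(norm (s n - a))\<^sup>2 \<le> (norm (s n - b))\<^sup>2 + norm (a-b) * (2*norm (s n) + norm a + norm b)" by (rule sq_lip)
    also have "\<dots> \<le> (norm (s n - b))\<^sup>2 + norm (a-b) * (2*M + norm a + norm b)"
      using assms unfolding bseqv_def by (intro add_left_mono mult_left_mono) auto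
    finally show "(norm (s n - a))\<^sup>2 \<le> norm (a-b) * (2*M + norm a + norm b) + (norm (s n - b))\<^sup>2" by simp
  qed
  also have "\<dots> = norm (a-b) * (2*M + norm a + norm b) + psi s b" unfolding psi_def
    by (rule LS_lim_add[OF bdd_sq[OF assms]]) simp
  finally show ?thesis by simp
qed

lemma center_exists:
  fixes s :: "nat \<Rightarrow> 'a::{real_inner,complete_space}"
  assumes "bseqv s M"
  shows "\<exists>c. \<forall>z. psi s c \<le> psi s z"
  using strongly_convex_min[of UNIV "psi s" "2*M"] psi_nonneg[OF assms] psi_mid[OF assms]
    psi_cont[OF assms] by (simp add: add.assoc)

lemma aux2: "(x::real) \<le> (x+y)/2 - n/4 \<Longrightarrow> y \<le> x \<Longrightarrow> n \<le> 0" by (simp add: field_simps)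

lemma center_unique:
  assumes "bseqv s M" "\<forall>z. psi s c \<le> psi s z" "psi s d \<le> psi s c"
  shows "d = c"
proof -
  have "psi s c \<le> psi s ((1/2) *\<^sub>R (c+d))" using assms(2) by blast
  also have "\<dots> \<le> (psi s c + psi s d)/2 - (norm (c-d))\<^sup>2 / 4" by (rule psi_mid[OF assms(1)])
  finally have "(norm (c-d))\<^sup>2 \<le> 0" using assms(3) by (rule aux2)
  then show ?thesis by simp
qed

lemma center_in:
  fixes s :: "nat \<Rightarrow> 'a::{real_inner,complete_space}"
  assumes "bseqv s M" "\<forall>z. psi s c \<le> psi s z"
    and K: "closed K" "convex K" "K \<noteq> {}" and ev: "eventually (\<lambda>n. s n \<in> K) sequentially"
  shows "c \<in> K"
proof -
  define p where "p = metric_proj K c"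
  note pp = metric_proj_props[OF K, where x=c, folded p_def]
  have "psi s p + (norm (c - p))\<^sup>2 \<le> psi s c"
  proof -
    have pz: "(norm (c - p))\<^sup>2 + (norm (z - p))\<^sup>2 \<le> (norm (z - c))\<^sup>2" if "z \<in> K" for z
      using proj_pyth[OF K(2) pp(1) _ that] pp(2) by (simp add: add.commute)
    have "LS (\<lambda>n. (norm (c - p))\<^sup>2 + (norm (s n - p))\<^sup>2) \<le> psi s c" unfolding psi_def
      by (rule LS_mono[OF bdd_add[OF bdd_const bdd_sq[OF assms(1)]] bdd_sq[OF assms(1)]])
         (use ev in \<open>auto elim!: eventually_mono intro: pz\<close>)
    moreover have "LS (\<lambda>n. (norm (c - p))\<^sup>2 + (norm (s n - p))\<^sup>2) = (norm (c - p))\<^sup>2 + psi s p"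
      unfolding psi_def by (rule LS_lim_add[OF bdd_sq[OF assms(1)]]) simp
    ultimately show ?thesis by simp
  qed
  moreover have "psi s c \<le> psi s p" using assms(2) by blast
  ultimately have "(norm (c - p))\<^sup>2 \<le> 0" by linarith
  then have "c = p" by simp
  then show ?thesis using pp(1) by simp
qed

lemma center_weak:
  assumes "bseqv s M" "\<forall>z. psi s c \<le> psi s z" and lim: "(\<lambda>n. (s n - c) \<bullet> w) \<longlonglongrightarrow> \<delta>"
  shows "\<delta> = 0"
proof -
  have key: "0 \<le> -2*t*\<delta> + t\<^sup>2 * (norm w)\<^sup>2" for t
  proof -
    have e: "(\<lambda>n. (norm (s n - (c + t *\<^sub>R w)))\<^sup>2) = (\<lambda>n. (-2*t*((s n - c) \<bullet> w) + t\<^sup>2 * (norm w)\<^sup>2) + (norm (s n - c))\<^sup>2)"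
    proof
      fix n
      have "(norm (s n - (c + t *\<^sub>R w)))\<^sup>2 = (norm ((s n - c) + (- t *\<^sub>R w)))\<^sup>2" by (simp add: algebra_simps)
      also have "\<dots> = (norm (s n - c))\<^sup>2 + t\<^sup>2 * (norm w)\<^sup>2 - 2*t*((s n - c) \<bullet> w)"
        unfolding sq_expand by (simp add: power_mult_distrib)
      finally show "(norm (s n - (c + t *\<^sub>R w)))\<^sup>2 = (-2*t*((s n - c) \<bullet> w) + t\<^sup>2 * (norm w)\<^sup>2) + (norm (s n - c))\<^sup>2"
        by simp
    qed
    have "psi s (c + t *\<^sub>R w) = (-2*t*\<delta> + t\<^sup>2 * (norm w)\<^sup>2) + psi s c" unfolding psi_def e
      by (rule LS_lim_add[OF bdd_sq[OF assms(1)]]) (intro tendsto_intros lim)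
    moreover have "psi s c \<le> psi s (c + t *\<^sub>R w)" using assms(2) by blast
    ultimately show ?thesis by simp
  qed
  have "\<delta> \<le> 0"
  proof (rule small_pos_contra[where n="(norm w)\<^sup>2"])
    fix t :: real assume t: "0 < t" "t \<le> 1"
    have "2*t*\<delta> \<le> t * (t * (norm w)\<^sup>2)" using key[of t] by (simp add: power2_eq_square algebra_simps)
    then show "2 * \<delta> \<le> t * (norm w)\<^sup>2" using t by (simp add: mult.assoc)
  qed simp
  moreover have "-\<delta> \<le> 0"
  proof (rule small_pos_contra[where n="(norm w)\<^sup>2"])
    fix t :: real assume t: "0 < t" "t \<le> 1"
    have "t * (2*(-\<delta>)) \<le> t * (t * (norm w)\<^sup>2)" using key[of "-t"] by (simp add: power2_eq_square algebra_simps)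
    then show "2 * (-\<delta>) \<le> t * (norm w)\<^sup>2" using mult_le_cancel_left_pos[OF t(1)] by blast
  qed simp
  ultimately show ?thesis by simp
qed




lemma weak_from_subseq:
  fixes a :: "nat \<Rightarrow> real"
  assumes "bdd a" and sub: "\<And>r l. strict_mono r \<Longrightarrow> (a \<circ> r) \<longlonglongrightarrow> l \<Longrightarrow> l = 0"
  shows "a \<longlonglongrightarrow> 0"
proof -
  have one: "limsup (\<lambda>n. ereal (b n)) = 0" if "bdd b" and sb: "\<And>r l. strict_mono r \<Longrightarrow> (b \<circ> r) \<longlonglongrightarrow> l \<Longrightarrow> l = 0" for b
  proof -
    obtain r where r: "strict_mono r" "((\<lambda>n. ereal (b n)) \<circ> r) \<longlonglongrightarrow> limsup (\<lambda>n. ereal (b n))"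
      using limsup_subseq_lim by blast
    then have "(\<lambda>n. ereal ((b \<circ> r) n)) \<longlonglongrightarrow> ereal (LS b)" using LS_fin[OF that(1)] by (simp add: o_def)
    then have "(b \<circ> r) \<longlonglongrightarrow> LS b" unfolding o_def by (simp add: lim_ereal)
    then have "LS b = 0" using sb r(1) by blast
    then show ?thesis using LS_fin[OF that(1)] by simp
  qed
  have b2: "bdd (\<lambda>n. - a n)" using assms(1) unfolding bdd_def by simp
  have "limsup (\<lambda>n. ereal (- a n)) = 0"
  proof (rule one[OF b2])
    fix r l assume "strict_mono r" "((\<lambda>n. - a n) \<circ> r) \<longlonglongrightarrow> l"
    then have "(a \<circ> r) \<longlonglongrightarrow> -l" using tendsto_minus[of "(\<lambda>n. - a n) \<circ> r" l] by (simp add: o_def)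
    then show "l = 0" using sub \<open>strict_mono r\<close> by fastforce
  qed
  then have li: "liminf (\<lambda>n. ereal (a n)) = 0"
    using ereal_Liminf_uminus[of sequentially "\<lambda>n. ereal (- a n)"] by simp
  have ls: "limsup (\<lambda>n. ereal (a n)) = 0" by (rule one[OF assms])
  have "(\<lambda>n. ereal (a n)) \<longlonglongrightarrow> 0" 
    by (subst tendsto_iff_Liminf_eq_Limsup) (simp_all add: li ls)
  then show ?thesis by (simp add: zero_ereal_def lim_ereal)
qed

lemma hyb_ineq:
  assumes "hybrid E S" "x \<in> E" "y \<in> E"
  shows "(norm (S x - S y))\<^sup>2 \<le> (norm (x - y))\<^sup>2 + (x - S x) \<bullet> (y - S y)"
proof -
  have h: "3 * (norm (S x - S y))\<^sup>2 \<le> (norm (x - y))\<^sup>2 + (norm (S x - y))\<^sup>2 + (norm (S y - x))\<^sup>2"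
    using assms unfolding hybrid_def by blast
  define A where "A = x - S x"
  define B where "B = y - S y"
  define D where "D = S x - S y"
  have e1: "x - y = A + (D - B)" "S x - y = D - B" "S y - x = -(D + A)"
    by (simp_all add: A_def B_def D_def algebra_simps)
  have h2: "3 * (D \<bullet> D) \<le> (A + (D - B)) \<bullet> (A + (D - B)) + (D - B) \<bullet> (D - B) + (D + A) \<bullet> (D + A)"
    using h unfolding e1 norm_minus_cancel D_def[symmetric] power2_norm_eq_inner .
  show ?thesis unfolding e1(1) power2_norm_eq_inner D_def[symmetric] A_def[symmetric] B_def[symmetric]
    using h2 by (simp add: inner_add_left inner_add_right inner_diff_left inner_diff_right inner_commute algebra_simps)
qed

lemma sublevel_closed:
  fixes E :: "'a::metric_space set"
  assumes "closed E" "lsc_on E g"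
  shows "closed {z\<in>E. g z \<le> c}"
  unfolding closed_sequential_limits
proof (intro allI impI, elim conjE)
  fix s l assume s: "\<forall>n. s n \<in> {z\<in>E. g z \<le> c}" and l: "s \<longlonglongrightarrow> l"
  have lE: "l \<in> E" using assms(1) s l closed_sequential_limits by blast
  show "l \<in> {z\<in>E. g z \<le> c}"
  proof (rule ccontr)
    assume "l \<notin> {z\<in>E. g z \<le> c}"
    then have gl: "c < g l" using lE by auto
    then have ev: "\<forall>\<^sub>F y in at l within E. c < g y" using assms(2) lE unfolding lsc_on_def by blast
    then obtain S where S: "open S" "l \<in> S" "\<And>y. y \<in> S \<Longrightarrow> y \<noteq> l \<Longrightarrow> y \<in> E \<Longrightarrow> c < g y"
      unfolding eventually_at_topological by blast
    obtain N where "\<And>n. n \<ge> N \<Longrightarrow> s n \<in> S" using l S(1,2) unfolding lim_explicit by blast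
    then have "s N \<in> S" by simp
    moreover have "s N \<in> E" "g (s N) \<le> c" using s by auto
    ultimately have "s N = l" using S(3) by force
    then show False using s gl by (metis (mono_tags, lifting) mem_Collect_eq not_le)
  qed
qed

lemma sublevel_convex:
  assumes "convex_on E g"
  shows "convex {z\<in>E. g z \<le> c}"
proof (rule convexI)
  have cE: "convex E" using assms convex_on_imp_convex by blast
  fix x y :: 'a and u v :: real assume xy: "x \<in> {z\<in>E. g z \<le> c}" "y \<in> {z\<in>E. g z \<le> c}" and uv: "0 \<le> u" "0 \<le> v" "u + v = 1"
  have "u *\<^sub>R x + v *\<^sub>R y \<in> E" using convexD[OF cE] xy uv by auto
  moreover have "g (u *\<^sub>R x + v *\<^sub>R y) \<le> u * g x + v * g y"
    using assms xy uv unfolding convex_on_def by auto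
  moreover have "u * g x + v * g y \<le> u * c + v * c" using xy uv by (intro add_mono mult_left_mono) auto
  moreover have "u * c + v * c = c" using uv by (metis distrib_right mult_1)
  ultimately show "u *\<^sub>R x + v *\<^sub>R y \<in> {z\<in>E. g z \<le> c}" by simp
qed

lemma bc:
  assumes "bifun_conds E f"
  shows "\<And>x. x\<in>E \<Longrightarrow> f x x = 0" "\<And>x y. x\<in>E \<Longrightarrow> y\<in>E \<Longrightarrow> f x y + f y x \<le> 0"
    "\<And>x y z. x\<in>E \<Longrightarrow> y\<in>E \<Longrightarrow> z\<in>E \<Longrightarrow>
        Limsup (at_right 0) (\<lambda>t. ereal (f (t *\<^sub>R z + (1 - t) *\<^sub>R x) y)) \<le> ereal (f x y)"
    "\<And>x. x\<in>E \<Longrightarrow> convex_on E (f x)" "\<And>x. x\<in>E \<Longrightarrow> lsc_on E (f x)"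
proof -
  note a = assms[unfolded bifun_conds_def]
  show "\<And>x. x\<in>E \<Longrightarrow> f x x = 0" using a[THEN conjunct1] by simp
  show "\<And>x y. x\<in>E \<Longrightarrow> y\<in>E \<Longrightarrow> f x y + f y x \<le> 0" using a[THEN conjunct2, THEN conjunct1] by simp
  show "\<And>x y z. x\<in>E \<Longrightarrow> y\<in>E \<Longrightarrow> z\<in>E \<Longrightarrow>
        Limsup (at_right 0) (\<lambda>t. ereal (f (t *\<^sub>R z + (1 - t) *\<^sub>R x) y)) \<le> ereal (f x y)"
    using a[THEN conjunct2, THEN conjunct2, THEN conjunct1] by simp
  show "\<And>x. x\<in>E \<Longrightarrow> convex_on E (f x)" "\<And>x. x\<in>E \<Longrightarrow> lsc_on E (f x)"
    using a[THEN conjunct2, THEN conjunct2, THEN conjunct2] by simp_all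
qed

lemma EP_char:
  assumes f: "bifun_conds E f" and cE: "convex E"
  shows "EP E f = {x\<in>E. \<forall>y\<in>E. f y x \<le> 0}"
proof
  show "EP E f \<subseteq> {x\<in>E. \<forall>y\<in>E. f y x \<le> 0}"
  proof
    fix x assume "x \<in> EP E f"
    then have x: "x \<in> E" "\<forall>y\<in>E. f x y \<ge> 0" unfolding EP_def by auto
    have "f y x \<le> 0" if "y \<in> E" for y
    proof -
      have "f x y + f y x \<le> 0" using bc(2)[OF f x(1) that] .
      then show ?thesis using x(2) that by force
    qed
    then show "x \<in> {x\<in>E. \<forall>y\<in>E. f y x \<le> 0}" using x by auto
  qed
next
  show "{x\<in>E. \<forall>y\<in>E. f y x \<le> 0} \<subseteq> EP E f"
  proof
    fix x assume "x \<in> {x\<in>E. \<forall>y\<in>E. f y x \<le> 0}"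
    then have x: "x \<in> E" "\<And>y. y \<in> E \<Longrightarrow> f y x \<le> 0" by auto
    have "f x y \<ge> 0" if y: "y \<in> E" for y
    proof -
      have pos: "f (t *\<^sub>R y + (1 - t) *\<^sub>R x) y \<ge> 0" if t: "0 < t" "t \<le> 1" for t
      proof -
        define z where "z = t *\<^sub>R y + (1 - t) *\<^sub>R x"
        have zE: "z \<in> E" using convexD[OF cE y x(1), of t "1-t"] t by (simp add: z_def)
        have cz: "convex_on E (f z)" using bc(4)[OF f zE] .
        have "f z ((1 - t) *\<^sub>R x + t *\<^sub>R y) \<le> (1 - t) * f z x + t * f z y"
          by (rule convex_onD[OF cz]) (use t x(1) y in auto)
        moreover have "(1 - t) *\<^sub>R x + t *\<^sub>R y = z" by (simp add: z_def)
        moreover have "f z z = 0" using bc(1)[OF f zE] .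
        moreover have "(1 - t) * f z x \<le> 0" using x(2)[OF zE] t by (simp add: mult_nonneg_nonpos)
        ultimately have "0 \<le> t * f z y" by (metis add_le_same_cancel2 order_trans)
        then show ?thesis using t by (simp add: z_def zero_le_mult_iff)
      qed
      have "ereal 0 \<le> Limsup (at_right 0) (\<lambda>t. ereal (f (t *\<^sub>R y + (1 - t) *\<^sub>R x) y))"
      proof (rule le_Limsup)
        show "at_right (0::real) \<noteq> bot" by simp
        show "\<forall>\<^sub>F t in at_right 0. ereal 0 \<le> ereal (f (t *\<^sub>R y + (1 - t) *\<^sub>R x) y)"
          unfolding eventually_at_right_field by (rule exI[of _ 1]) (simp add: pos)
      qed
      also have "\<dots> \<le> ereal (f x y)" using bc(3)[OF f x(1) y y] .
      finally show ?thesis by simp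
    qed
    then show "x \<in> EP E f" using x unfolding EP_def by auto
  qed
qed


lemma EP_closed_convex:
  assumes f: "bifun_conds E f" and cE: "convex E" and clE: "closed E"
  shows "closed (EP E f)" "convex (EP E f)"
proof -
  have e: "EP E f = E \<inter> (\<Inter>y\<in>E. {z\<in>E. f y z \<le> 0})" unfolding EP_char[OF f cE] by blast
  have c1: "closed {z\<in>E. f y z \<le> 0}" if "y \<in> E" for y
    using sublevel_closed[OF clE bc(5)[OF f that]] .
  have c2: "convex {z\<in>E. f y z \<le> 0}" if "y \<in> E" for y
    using sublevel_convex[OF bc(4)[OF f that]] .
  show "closed (EP E f)" unfolding e by (intro closed_Int clE closed_INT ballI c1)
  show "convex (EP E f)" unfolding e by (intro convex_Int cE convex_INT ballI c2)
qed





lemma hybD: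
  assumes "hybrid E S" "x \<in> E" "y \<in> E"
  shows "3 * (norm (S x - S y))\<^sup>2 \<le> (norm (x - y))\<^sup>2 + (norm (S x - y))\<^sup>2 + (norm (S y - x))\<^sup>2"
    "S x \<in> E"
  using assms unfolding hybrid_def by auto

lemma quasi:
  assumes "hybrid E S" "p \<in> fixset E S" "x \<in> E"
  shows "norm (S x - p) \<le> norm (x - p)"
proof -
  have pE: "p \<in> E" "S p = p" using assms(2) unfolding fixset_def by auto
  have "3 * (norm (S x - S p))\<^sup>2 \<le> (norm (x - p))\<^sup>2 + (norm (S x - p))\<^sup>2 + (norm (S p - x))\<^sup>2"
    by (rule hybD(1)[OF assms(1,3) pE(1)])
  moreover have "norm (S p - x) = norm (x - p)" using pE(2) norm_minus_commute by metis
  ultimately have "(norm (S x - p))\<^sup>2 \<le> (norm (x - p))\<^sup>2" using pE(2) by simp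
  then show ?thesis by (rule power2_le_imp_le) simp
qed

lemma halfspace_set:
  fixes a b :: "'a::real_inner"
  shows "{z. norm (a - z) \<le> norm (b - z)} = {z. (2 *\<^sub>R (b - a)) \<bullet> z \<le> b \<bullet> b - a \<bullet> a}"
proof -
  have "norm (a - z) \<le> norm (b - z) \<longleftrightarrow> (2 *\<^sub>R (b - a)) \<bullet> z \<le> b \<bullet> b - a \<bullet> a" for z
  proof -
    have 1: "norm (a - z) \<le> norm (b - z) \<longleftrightarrow> (norm (a - z))\<^sup>2 \<le> (norm (b - z))\<^sup>2"
      by (meson norm_ge_zero power2_le_imp_le power_mono)
    have 2: "(norm (a - z))\<^sup>2 = a \<bullet> a - 2 * (a \<bullet> z) + z \<bullet> z" "(norm (b - z))\<^sup>2 = b \<bullet> b - 2 * (b \<bullet> z) + z \<bullet> z"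
      by (simp_all add: power2_norm_eq_inner inner_diff_left inner_diff_right inner_commute)
    have 3: "(2 *\<^sub>R (b - a)) \<bullet> z = 2 * (b \<bullet> z) - 2 * (a \<bullet> z)"
      by (simp add: inner_diff_left)
    show ?thesis unfolding 1 2 3 by linarith
  qed
  then show ?thesis by blast
qed

lemma fixset_closed_convex:
  assumes "hybrid E S" "closed E" "convex E"
  shows "closed (fixset E S)" "convex (fixset E S)"
proof -
  have e: "fixset E S = E \<inter> (\<Inter>y\<in>E. {z. norm (S y - z) \<le> norm (y - z)})"
  proof
    show "fixset E S \<subseteq> E \<inter> (\<Inter>y\<in>E. {z. norm (S y - z) \<le> norm (y - z)})"
      using quasi[OF assms(1)] unfolding fixset_def by auto
    show "E \<inter> (\<Inter>y\<in>E. {z. norm (S y - z) \<le> norm (y - z)}) \<subseteq> fixset E S"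
    proof
      fix z assume "z \<in> E \<inter> (\<Inter>y\<in>E. {z. norm (S y - z) \<le> norm (y - z)})"
      then have "z \<in> E" "norm (S z - z) \<le> norm (z - z)" by auto
      then show "z \<in> fixset E S" unfolding fixset_def by simp
    qed
  qed
  show "closed (fixset E S)" unfolding e halfspace_set
    by (intro closed_Int assms(2) closed_INT ballI closed_halfspace_le)
  show "convex (fixset E S)" unfolding e halfspace_set
    by (intro convex_Int assms(3) convex_INT ballI convex_halfspace_le)
qed




lemma conv_id:
  fixes a b :: "'a::real_inner"
  shows "(norm ((1-t) *\<^sub>R a + t *\<^sub>R b))\<^sup>2 = (1-t) * (norm a)\<^sup>2 + t * (norm b)\<^sup>2 - t * (1-t) * (norm (a-b))\<^sup>2"
proof -
  have 1: "(norm ((1-t) *\<^sub>R a + t *\<^sub>R b))\<^sup>2 = (1-t)\<^sup>2 * (a \<bullet> a) + t\<^sup>2 * (b \<bullet> b) + 2 * t * (1-t) * (a \<bullet> b)"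
    unfolding power2_norm_eq_inner
    by (simp add: inner_add_left inner_add_right inner_commute power2_eq_square algebra_simps)
  have 2: "(norm (a-b))\<^sup>2 = a \<bullet> a + b \<bullet> b - 2 * (a \<bullet> b)" "(norm a)\<^sup>2 = a \<bullet> a" "(norm b)\<^sup>2 = b \<bullet> b"
    by (simp_all add: power2_norm_eq_inner inner_diff_left inner_diff_right inner_commute)
  show ?thesis unfolding 1 2 by (simp add: power2_eq_square algebra_simps)
qed

locale setting =
  fixes E :: "'a::{real_inner, complete_space} set"
    and f :: "'a \<Rightarrow> 'a \<Rightarrow> real"
    and S :: "'a \<Rightarrow> 'a"
    and \<alpha>s \<beta>s r :: "nat \<Rightarrow> real"
    and a b :: real
    and x0 :: 'a
    and x u y :: "nat \<Rightarrow> 'a"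
  assumes E: "E \<noteq> {}" "closed E" "convex E"
    and f: "bifun_conds E f"
    and S: "hybrid E S"
    and nonempty: "fixset E S \<inter> EP E f \<noteq> {}"
    and alpha: "a > 0" "\<forall>n. a \<le> \<alpha>s n \<and> \<alpha>s n \<le> 1"
    and r_pos: "\<forall>n. r n > 0"
    and r_liminf: "liminf (\<lambda>n. ereal (r n)) > 0"
    and b: "0 < b" "b < 1"
    and beta: "\<forall>n. b \<le> \<beta>s n \<and> \<beta>s n \<le> 1"
    and beta_liminf: "liminf (\<lambda>n. ereal (\<beta>s n * (1 - \<beta>s n))) > 0"
    and x0: "x0 \<in> E" "x 0 = x0"
    and u: "\<forall>n. u n \<in> E \<and> (\<forall>z\<in>E. f (u n) z + (1 / r n) * ((z - u n) \<bullet> (u n - x n)) \<ge> 0)"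
    and y: "\<forall>n. y n = (1 - \<beta>s n) *\<^sub>R x n + \<beta>s n *\<^sub>R S (u n)"
    and x: "\<forall>n. x (Suc n) = (1 - \<alpha>s n) *\<^sub>R x n + \<alpha>s n *\<^sub>R S (y n)"
begin

definition "FF = fixset E S \<inter> EP E f"

lemma FF_props: "closed FF" "convex FF" "FF \<noteq> {}" "FF \<subseteq> E"
  using fixset_closed_convex[OF S E(2,3)] EP_closed_convex[OF f E(3,2)] nonempty
  unfolding FF_def by (auto simp: fixset_def intro: closed_Int convex_Int)

lemma FF_mem: "p \<in> FF \<Longrightarrow> p \<in> E \<and> S p = p \<and> (\<forall>z\<in>E. f p z \<ge> 0)"
  unfolding FF_def fixset_def EP_def by auto

lemma al: "0 < \<alpha>s n" "\<alpha>s n \<le> 1" "a \<le> \<alpha>s n" using alpha by (auto intro: less_le_trans)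
lemma be: "0 < \<beta>s n" "\<beta>s n \<le> 1" "b \<le> \<beta>s n" using beta b by (auto intro: less_le_trans)

lemma uE: "u n \<in> E" using u by blast
lemma SuE: "S (u n) \<in> E" using hybD(2)[OF S uE uE] .

lemma xE: "x n \<in> E" and yE: "y n \<in> E"
proof -
  have yE': "y n \<in> E" if "x n \<in> E" for n
  proof -
    have "(1 - \<beta>s n) *\<^sub>R x n + \<beta>s n *\<^sub>R S (u n) \<in> E"
      using convexD[OF E(3) that SuE, of "1 - \<beta>s n" "\<beta>s n"] be[of n] by simp
    then show ?thesis using y by simp
  qed
  have "x n \<in> E" for n
  proof (induction n)
    case 0 then show ?case using x0 by simp
  next
    case (Suc n)
    have "S (y n) \<in> E" using hybD(2)[OF S yE'[OF Suc] yE'[OF Suc]] .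
    then have "(1 - \<alpha>s n) *\<^sub>R x n + \<alpha>s n *\<^sub>R S (y n) \<in> E"
      using convexD[OF E(3) Suc, of "S (y n)" "1 - \<alpha>s n" "\<alpha>s n"] al[of n] by simp
    then show ?case using x by simp
  qed
  then show "x n \<in> E" "y n \<in> E" using yE' by auto
qed

lemma SyE: "S (y n) \<in> E" using hybD(2)[OF S yE yE] .

lemma up:
  assumes p: "p \<in> FF"
  shows "(norm (u n - p))\<^sup>2 + (norm (x n - u n))\<^sup>2 \<le> (norm (x n - p))\<^sup>2"
proof -
  have pp: "p \<in> E" "S p = p" "\<forall>z\<in>E. f p z \<ge> 0" using FF_mem[OF p] by auto
  have h: "f (u n) p + (1 / r n) * ((p - u n) \<bullet> (u n - x n)) \<ge> 0" using u pp(1) by blast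
  have "f (u n) p + f p (u n) \<le> 0" by (rule bc(2)[OF f uE pp(1)])
  moreover have "f p (u n) \<ge> 0" using pp(3) uE by blast
  ultimately have "(1 / r n) * ((p - u n) \<bullet> (u n - x n)) \<ge> 0" using h by linarith
  then have ip: "(p - u n) \<bullet> (u n - x n) \<ge> 0" using r_pos[rule_format, of n] by (simp add: zero_le_divide_iff)
  have "(norm (x n - p))\<^sup>2 = (norm ((x n - u n) + (u n - p)))\<^sup>2" by simp
  also have "\<dots> = (norm (x n - u n))\<^sup>2 + (norm (u n - p))\<^sup>2 + 2 * ((x n - u n) \<bullet> (u n - p))" by (rule sq_expand)
  also have "(x n - u n) \<bullet> (u n - p) = (p - u n) \<bullet> (u n - x n)"
    by (simp add: inner_diff_left inner_diff_right inner_commute algebra_simps)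
  finally show ?thesis using ip by linarith
qed

lemma quasiF: "p \<in> FF \<Longrightarrow> z \<in> E \<Longrightarrow> norm (S z - p) \<le> norm (z - p)"
  using quasi[OF S] unfolding FF_def by blast

lemma yp:
  assumes p: "p \<in> FF"
  shows "(norm (y n - p))\<^sup>2 \<le> (norm (x n - p))\<^sup>2 - \<beta>s n * (norm (x n - u n))\<^sup>2
           - \<beta>s n * (1 - \<beta>s n) * (norm (x n - S (u n)))\<^sup>2"
proof -
  have e: "y n - p = (1 - \<beta>s n) *\<^sub>R (x n - p) + \<beta>s n *\<^sub>R (S (u n) - p)"
    using y by (simp add: algebra_simps)
  have "(norm (y n - p))\<^sup>2 = (1 - \<beta>s n) * (norm (x n - p))\<^sup>2 + \<beta>s n * (norm (S (u n) - p))\<^sup>2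
      - \<beta>s n * (1 - \<beta>s n) * (norm (x n - S (u n)))\<^sup>2"
    unfolding e conv_id by simp
  moreover have "(norm (S (u n) - p))\<^sup>2 \<le> (norm (u n - p))\<^sup>2"
    using quasiF[OF p uE] by (simp add: power_mono)
  moreover have "(norm (u n - p))\<^sup>2 \<le> (norm (x n - p))\<^sup>2 - (norm (x n - u n))\<^sup>2" using up[OF p, of n] by linarith
  ultimately have "(norm (y n - p))\<^sup>2 \<le> (1 - \<beta>s n) * (norm (x n - p))\<^sup>2 + \<beta>s n * ((norm (x n - p))\<^sup>2 - (norm (x n - u n))\<^sup>2)
      - \<beta>s n * (1 - \<beta>s n) * (norm (x n - S (u n)))\<^sup>2"
    using be[of n] by (smt (verit) mult_left_mono)
  then show ?thesis by (simp add: algebra_simps)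
qed

lemma xp:
  assumes p: "p \<in> FF"
  shows "(norm (x (Suc n) - p))\<^sup>2 \<le> (norm (x n - p))\<^sup>2 - \<alpha>s n * (\<beta>s n * (norm (x n - u n))\<^sup>2
           + \<beta>s n * (1 - \<beta>s n) * (norm (x n - S (u n)))\<^sup>2)"
proof -
  have e: "x (Suc n) - p = (1 - \<alpha>s n) *\<^sub>R (x n - p) + \<alpha>s n *\<^sub>R (S (y n) - p)"
    using x by (simp add: algebra_simps)
  have "(norm (x (Suc n) - p))\<^sup>2 = (1 - \<alpha>s n) * (norm (x n - p))\<^sup>2 + \<alpha>s n * (norm (S (y n) - p))\<^sup>2
      - \<alpha>s n * (1 - \<alpha>s n) * (norm (x n - S (y n)))\<^sup>2"
    unfolding e conv_id by simp
  moreover have "\<alpha>s n * (1 - \<alpha>s n) * (norm (x n - S (y n)))\<^sup>2 \<ge> 0" using al[of n] by simp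
  moreover have "(norm (S (y n) - p))\<^sup>2 \<le> (norm (y n - p))\<^sup>2"
    using quasiF[OF p yE] by (simp add: power_mono)
  ultimately have "(norm (x (Suc n) - p))\<^sup>2 \<le> (1 - \<alpha>s n) * (norm (x n - p))\<^sup>2 + \<alpha>s n * (norm (y n - p))\<^sup>2"
    using al[of n] by (smt (verit) mult_left_mono)
  also have "\<dots> \<le> (1 - \<alpha>s n) * (norm (x n - p))\<^sup>2 + \<alpha>s n * ((norm (x n - p))\<^sup>2 - \<beta>s n * (norm (x n - u n))\<^sup>2
           - \<beta>s n * (1 - \<beta>s n) * (norm (x n - S (u n)))\<^sup>2)"
    using yp[OF p, of n] al[of n] by (intro add_left_mono mult_left_mono) auto
  finally show ?thesis by (simp add: algebra_simps)
qed

end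



lemma sq_to0:
  fixes g :: "nat \<Rightarrow> 'a::real_normed_vector"
  assumes "(\<lambda>n. (norm (g n))\<^sup>2) \<longlonglongrightarrow> 0"
  shows "(\<lambda>n. norm (g n)) \<longlonglongrightarrow> 0"
proof -
  have "(\<lambda>n. sqrt ((norm (g n))\<^sup>2)) \<longlonglongrightarrow> sqrt 0" by (intro tendsto_intros assms)
  then show ?thesis by simp
qed

lemma liminf_pos:
  assumes "liminf (\<lambda>n. ereal (h n)) > 0"
  obtains k where "k > 0" "eventually (\<lambda>n. h n > k) sequentially"
proof -
  obtain k where k: "0 < ereal k" "ereal k < liminf (\<lambda>n. ereal (h n))" using ereal_dense2[OF assms] by blast
  from k(2) have "eventually (\<lambda>n. ereal k < ereal (h n)) sequentially" by (rule less_LiminfD)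
  then have "eventually (\<lambda>n. h n > k) sequentially" by simp
  then show ?thesis using that k(1) by simp
qed

context setting begin

lemma a0: "0 \<le> \<alpha>s n" using al(1)[of n] by simp

lemma fejer: "p \<in> FF \<Longrightarrow> norm (x (Suc n) - p) \<le> norm (x n - p)"
proof -
  assume p: "p \<in> FF"
  have "\<alpha>s n * (\<beta>s n * (norm (x n - u n))\<^sup>2 + \<beta>s n * (1 - \<beta>s n) * (norm (x n - S (u n)))\<^sup>2) \<ge> 0"
    using al[of n] be[of n] by simp
  then have "(norm (x (Suc n) - p))\<^sup>2 \<le> (norm (x n - p))\<^sup>2" using xp[OF p, of n] by linarith
  then show ?thesis by (rule power2_le_imp_le) simp
qed

lemma fejer_mono: "p \<in> FF \<Longrightarrow> n \<le> m \<Longrightarrow> norm (x m - p) \<le> norm (x n - p)"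
proof -
  assume p: "p \<in> FF" and nm: "n \<le> m"
  show ?thesis using nm
  proof (induction m rule: dec_induct)
    case (step m) then show ?case using fejer[OF p, of m] by linarith
  qed simp
qed

lemma Dlim: assumes p: "p \<in> FF" obtains L where "(\<lambda>n. (norm (x n - p))\<^sup>2) \<longlonglongrightarrow> L"
proof -
  have dec: "decseq (\<lambda>n. (norm (x n - p))\<^sup>2)"
    by (rule decseq_SucI) (use fejer[OF p] in \<open>simp add: power_mono\<close>)
  have nn: "\<forall>i. 0 \<le> (norm (x i - p))\<^sup>2" by simp
  obtain L where "(\<lambda>n. (norm (x n - p))\<^sup>2) \<longlonglongrightarrow> L" using decseq_convergent[OF dec nn] by blast
  then show ?thesis using that by blast
qed

lemma Ddiff: assumes p: "p \<in> FF"
  shows "(\<lambda>n. (norm (x n - p))\<^sup>2 - (norm (x (Suc n) - p))\<^sup>2) \<longlonglongrightarrow> 0"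
proof -
  obtain L where L: "(\<lambda>n. (norm (x n - p))\<^sup>2) \<longlonglongrightarrow> L" using Dlim[OF p] by blast
  have "(\<lambda>n. (norm (x n - p))\<^sup>2 - (norm (x (Suc n) - p))\<^sup>2) \<longlonglongrightarrow> L - L"
    by (intro tendsto_intros L LIMSEQ_Suc[OF L])
  then show ?thesis by simp
qed

lemma p0: obtains p0 where "p0 \<in> FF" using FF_props(3) by blast

lemma xu0: "(\<lambda>n. norm (x n - u n)) \<longlonglongrightarrow> 0"
proof -
  obtain p where p: "p \<in> FF" by (rule p0)
  have "(\<lambda>n. (norm (x n - u n))\<^sup>2) \<longlonglongrightarrow> 0"
  proof (rule real_tendsto_sandwich[where f="\<lambda>n. 0" and h="\<lambda>n. ((norm (x n - p))\<^sup>2 - (norm (x (Suc n) - p))\<^sup>2) / (a * b)"])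
    show "\<forall>\<^sub>F n in sequentially. 0 \<le> (norm (x n - u n))\<^sup>2" by simp
    show "\<forall>\<^sub>F n in sequentially. (norm (x n - u n))\<^sup>2 \<le> ((norm (x n - p))\<^sup>2 - (norm (x (Suc n) - p))\<^sup>2) / (a * b)"
    proof (rule always_eventually, rule allI)
      fix n
      have ab: "a * b > 0" using alpha b by simp
      have "a * b \<le> \<alpha>s n * \<beta>s n" using al[of n] be[of n] alpha b a0[of n] by (intro mult_mono) (auto simp: less_imp_le)
      then have "a * b * (norm (x n - u n))\<^sup>2 \<le> \<alpha>s n * \<beta>s n * (norm (x n - u n))\<^sup>2"
        by (intro mult_right_mono) auto
      also have "\<dots> = \<alpha>s n * (\<beta>s n * (norm (x n - u n))\<^sup>2)" by simp
      also have "\<dots> \<le> \<alpha>s n * (\<beta>s n * (norm (x n - u n))\<^sup>2 + \<beta>s n * (1 - \<beta>s n) * (norm (x n - S (u n)))\<^sup>2)"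
        using al[of n] be[of n] by (intro mult_left_mono) auto
      also have "\<dots> \<le> (norm (x n - p))\<^sup>2 - (norm (x (Suc n) - p))\<^sup>2" using xp[OF p, of n] by linarith
      finally show "(norm (x n - u n))\<^sup>2 \<le> ((norm (x n - p))\<^sup>2 - (norm (x (Suc n) - p))\<^sup>2) / (a * b)"
        using ab by (simp add: field_simps)
    qed
    show "(\<lambda>n. 0) \<longlonglongrightarrow> 0" by simp
    show "(\<lambda>n. ((norm (x n - p))\<^sup>2 - (norm (x (Suc n) - p))\<^sup>2) / (a * b)) \<longlonglongrightarrow> 0"
      using tendsto_divide_zero[OF Ddiff[OF p], of "a*b"] by simp
  qed
  then show ?thesis by (rule sq_to0)
qed

lemma xSu0: "(\<lambda>n. norm (x n - S (u n))) \<longlonglongrightarrow> 0"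
proof -
  obtain p where p: "p \<in> FF" by (rule p0)
  obtain k where k: "k > 0" "eventually (\<lambda>n. \<beta>s n * (1 - \<beta>s n) > k) sequentially"
    using liminf_pos[OF beta_liminf] by blast
  have "(\<lambda>n. (norm (x n - S (u n)))\<^sup>2) \<longlonglongrightarrow> 0"
  proof (rule real_tendsto_sandwich[where f="\<lambda>n. 0" and h="\<lambda>n. ((norm (x n - p))\<^sup>2 - (norm (x (Suc n) - p))\<^sup>2) / (a * k)"])
    show "\<forall>\<^sub>F n in sequentially. 0 \<le> (norm (x n - S (u n)))\<^sup>2" by simp
    show "\<forall>\<^sub>F n in sequentially. (norm (x n - S (u n)))\<^sup>2 \<le> ((norm (x n - p))\<^sup>2 - (norm (x (Suc n) - p))\<^sup>2) / (a * k)"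
      using k(2)
    proof (rule eventually_mono)
      fix n assume kn: "\<beta>s n * (1 - \<beta>s n) > k"
      have ak: "a * k > 0" using alpha k by simp
      have "a * k \<le> \<alpha>s n * (\<beta>s n * (1 - \<beta>s n))" using al[of n] kn alpha k a0[of n] by (intro mult_mono) (auto simp: less_imp_le)
      then have "a * k * (norm (x n - S (u n)))\<^sup>2 \<le> \<alpha>s n * (\<beta>s n * (1 - \<beta>s n)) * (norm (x n - S (u n)))\<^sup>2"
        by (intro mult_right_mono) auto
      also have "\<dots> = \<alpha>s n * (\<beta>s n * (1 - \<beta>s n) * (norm (x n - S (u n)))\<^sup>2)" by simp
      also have "\<dots> \<le> \<alpha>s n * (\<beta>s n * (norm (x n - u n))\<^sup>2 + \<beta>s n * (1 - \<beta>s n) * (norm (x n - S (u n)))\<^sup>2)"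
        using al[of n] be[of n] by (intro mult_left_mono) auto
      also have "\<dots> \<le> (norm (x n - p))\<^sup>2 - (norm (x (Suc n) - p))\<^sup>2" using xp[OF p, of n] by linarith
      finally show "(norm (x n - S (u n)))\<^sup>2 \<le> ((norm (x n - p))\<^sup>2 - (norm (x (Suc n) - p))\<^sup>2) / (a * k)"
        using ak by (simp add: field_simps)
    qed
    show "(\<lambda>n. 0) \<longlonglongrightarrow> 0" by simp
    show "(\<lambda>n. ((norm (x n - p))\<^sup>2 - (norm (x (Suc n) - p))\<^sup>2) / (a * k)) \<longlonglongrightarrow> 0"
      using tendsto_divide_zero[OF Ddiff[OF p], of "a*k"] by simp
  qed
  then show ?thesis by (rule sq_to0)
qed

lemma uSu0: "(\<lambda>n. norm (u n - S (u n))) \<longlonglongrightarrow> 0"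
proof (rule real_tendsto_sandwich[where f="\<lambda>n. 0" and h="\<lambda>n. norm (x n - u n) + norm (x n - S (u n))"])
  show "\<forall>\<^sub>F n in sequentially. norm (u n - S (u n)) \<le> norm (x n - u n) + norm (x n - S (u n))"
  proof (rule always_eventually, rule allI)
    fix n
    have "u n - S (u n) = (x n - S (u n)) - (x n - u n)" by simp
    then have "norm (u n - S (u n)) = norm ((x n - S (u n)) - (x n - u n))" by simp
    also have "\<dots> \<le> norm (x n - S (u n)) + norm (x n - u n)" by (rule norm_triangle_ineq4)
    finally show "norm (u n - S (u n)) \<le> norm (x n - u n) + norm (x n - S (u n))" by simp
  qed
  show "(\<lambda>n. norm (x n - u n) + norm (x n - S (u n))) \<longlonglongrightarrow> 0"
    using tendsto_add[OF xu0 xSu0] by simp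
qed auto

end



lemma sq_lip2:
  fixes a b z :: "'a::real_inner"
  assumes "norm a \<le> M" "norm b \<le> M"
  shows "(norm (a - z))\<^sup>2 \<le> (norm (b - z))\<^sup>2 + norm (a - b) * (2 * norm z + 2 * M)"
proof -
  have "(norm (z - a))\<^sup>2 \<le> (norm (z - b))\<^sup>2 + norm (a - b) * (2 * norm z + norm a + norm b)" by (rule sq_lip)
  also have "norm (a - b) * (2 * norm z + norm a + norm b) \<le> norm (a - b) * (2 * norm z + 2 * M)"
    using assms by (intro mult_left_mono) auto
  finally show ?thesis by (simp add: norm_minus_commute)
qed

lemma inner_le_norms: "(v::'a::real_inner) \<bullet> w \<le> norm v * norm w"
  by (rule order_trans[OF abs_ge_self Cauchy_Schwarz_ineq2])

lemma psi_eq_close: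
  fixes s t :: "nat \<Rightarrow> 'a::real_inner"
  assumes "bseqv s M" "bseqv t M" "(\<lambda>n. norm (s n - t n)) \<longlonglongrightarrow> 0"
  shows "psi s z = psi t z"
proof -
  have g: "(\<lambda>n. norm (s n - t n) * (2 * norm z + 2 * M)) \<longlonglongrightarrow> 0"
    using tendsto_mult[OF assms(3) tendsto_const, of "2 * norm z + 2 * M"] by simp
  have g2: "(\<lambda>n. norm (t n - s n) * (2 * norm z + 2 * M)) \<longlonglongrightarrow> 0"
    using g by (simp add: norm_minus_commute)
  have "psi s z \<le> psi t z" unfolding psi_def
    by (rule LS_le[OF bdd_sq[OF assms(1)] bdd_sq[OF assms(2)] _ g])
       (use assms(1,2) in \<open>auto simp: bseqv_def intro!: always_eventually sq_lip2\<close>)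
  moreover have "psi t z \<le> psi s z" unfolding psi_def
    by (rule LS_le[OF bdd_sq[OF assms(2)] bdd_sq[OF assms(1)] _ g2])
       (use assms(1,2) in \<open>auto simp: bseqv_def intro!: always_eventually sq_lip2\<close>)
  ultimately show ?thesis by simp
qed

context setting begin

lemma bounds: obtains M where "bseqv x M" "bseqv u M" "bseqv (\<lambda>n. S (u n)) M"
proof -
  obtain p where p: "p \<in> FF" by (rule p0)
  define M where "M = norm (x 0 - p) + norm p"
  have xb: "norm (x n - p) \<le> norm (x 0 - p)" for n using fejer_mono[OF p, of 0 n] by simp
  have ub: "norm (u n - p) \<le> norm (x 0 - p)" for n
  proof -
    have "(norm (u n - p))\<^sup>2 \<le> (norm (x n - p))\<^sup>2"
      using up[OF p, of n] zero_le_power2[of "norm (x n - u n)"] by linarith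
    then have "norm (u n - p) \<le> norm (x n - p)" by (rule power2_le_imp_le) simp
    then show ?thesis using xb[of n] by linarith
  qed
  have sb: "norm (S (u n) - p) \<le> norm (x 0 - p)" for n using quasiF[OF p uE] ub[of n] by (rule order_trans)
  have nb: "norm v \<le> M" if "norm (v - p) \<le> norm (x 0 - p)" for v
    using that norm_triangle_ineq2[of v p] unfolding M_def by linarith
  show ?thesis by (rule that) (auto simp: bseqv_def intro!: nb xb ub sb)
qed

lemma fEP:
  assumes yE: "z \<in> E" and e: "\<epsilon> > 0"
  shows "eventually (\<lambda>n. f z (u n) \<le> \<epsilon>) sequentially"
proof -
  obtain M where M: "bseqv x M" "bseqv u M" "bseqv (\<lambda>n. S (u n)) M" by (rule bounds)
  obtain r0 where r0: "r0 > 0" "eventually (\<lambda>n. r n > r0) sequentially"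
    using liminf_pos[OF r_liminf] by blast
  have "(\<lambda>n. (norm z + M) * norm (x n - u n) / r0) \<longlonglongrightarrow> (norm z + M) * 0 / r0"
    by (intro tendsto_intros xu0) (use r0 in simp)
  then have "eventually (\<lambda>n. (norm z + M) * norm (x n - u n) / r0 < \<epsilon>) sequentially"
    using e by (simp add: order_tendstoD(2))
  with r0(2) show ?thesis
  proof eventually_elim
    case (elim n)
    have rn: "r n > 0" using r_pos by blast
    have h: "f (u n) z + (1 / r n) * ((z - u n) \<bullet> (u n - x n)) \<ge> 0" using u yE by blast
    have "f (u n) z + f z (u n) \<le> 0" by (rule bc(2)[OF f uE yE])
    then have "f z (u n) \<le> (1 / r n) * ((z - u n) \<bullet> (u n - x n))" using h by linarith
    also have "\<dots> \<le> (1 / r n) * (norm (z - u n) * norm (u n - x n))"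
      using rn by (intro mult_left_mono inner_le_norms) auto
    also have "\<dots> \<le> (1 / r0) * (norm (z - u n) * norm (u n - x n))"
      using rn elim(1) r0(1) by (intro mult_right_mono) (auto simp: field_simps)
    also have "norm (z - u n) \<le> norm z + M" using M(2) norm_triangle_ineq4[of z "u n"] unfolding bseqv_def
      by (smt (verit))
    then have "norm (z - u n) * norm (u n - x n) \<le> (norm z + M) * norm (u n - x n)"
      by (rule mult_right_mono) simp
    then have "(1 / r0) * (norm (z - u n) * norm (u n - x n)) \<le> (1 / r0) * ((norm z + M) * norm (x n - u n))"
      using r0(1) by (simp add: norm_minus_commute divide_right_mono)
    also have "\<dots> < \<epsilon>" using elim(2) by simp
    finally show ?case by simp
  qed
qed

end



context setting begin

lemma center_FF:
  assumes \<sigma>: "strict_mono \<sigma>" and c: "\<forall>z. psi (\<lambda>n. x (\<sigma> n)) c \<le> psi (\<lambda>n. x (\<sigma> n)) z"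
  shows "c \<in> FF"
proof -
  obtain M where M: "bseqv x M" "bseqv u M" "bseqv (\<lambda>n. S (u n)) M" by (rule bounds)
  define t where "t = (\<lambda>n. u (\<sigma> n))"
  have Ms: "bseqv (\<lambda>n. x (\<sigma> n)) M" "bseqv t M" "bseqv (\<lambda>n. S (t n)) M"
    using M by (auto simp: bseqv_def t_def)
  have xu: "(\<lambda>n. norm (x (\<sigma> n) - t n)) \<longlonglongrightarrow> 0"
    using LIMSEQ_subseq_LIMSEQ[OF xu0 \<sigma>] by (simp add: o_def t_def)
  have ct: "\<forall>z. psi t c \<le> psi t z" using c psi_eq_close[OF Ms(1,2) xu] by simp
  have tE: "\<And>n. t n \<in> E" by (simp add: t_def uE)
  have cE: "c \<in> E" by (rule center_in[OF Ms(2) ct E(2,3,1)]) (simp add: tE)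
  have tS: "(\<lambda>n. norm (t n - S (t n))) \<longlonglongrightarrow> 0"
    using LIMSEQ_subseq_LIMSEQ[OF uSu0 \<sigma>] by (simp add: o_def t_def)
  have "psi t (S c) \<le> psi t c"
    unfolding psi_def
  proof (rule LS_le[OF bdd_sq[OF Ms(2)] bdd_sq[OF Ms(2)]])
    have "(\<lambda>n. (norm (t n - S (t n)))\<^sup>2 + norm (t n - S (t n)) * norm (c - S c) + 2 * norm (t n - S (t n)) * (M + norm (S c)))
       \<longlonglongrightarrow> 0\<^sup>2 + 0 * norm (c - S c) + 2 * 0 * (M + norm (S c))"
      by (intro tendsto_intros tS)
    then show "(\<lambda>n. (norm (t n - S (t n)))\<^sup>2 + norm (t n - S (t n)) * norm (c - S c) + 2 * norm (t n - S (t n)) * (M + norm (S c)))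
       \<longlonglongrightarrow> 0" by simp
    show "\<forall>\<^sub>F n in sequentially. (norm (t n - S c))\<^sup>2 \<le> (norm (t n - c))\<^sup>2 +
       ((norm (t n - S (t n)))\<^sup>2 + norm (t n - S (t n)) * norm (c - S c) + 2 * norm (t n - S (t n)) * (M + norm (S c)))"
    proof (rule always_eventually, rule allI)
      fix n
      have h: "(norm (S (t n) - S c))\<^sup>2 \<le> (norm (t n - c))\<^sup>2 + (t n - S (t n)) \<bullet> (c - S c)"
        by (rule hyb_ineq[OF S tE cE])
      have i1: "(t n - S (t n)) \<bullet> (c - S c) \<le> norm (t n - S (t n)) * norm (c - S c)" by (rule inner_le_norms)
      have "norm (S (t n) - S c) \<le> M + norm (S c)"
        using Ms(3) norm_triangle_ineq4[of "S (t n)" "S c"] unfolding bseqv_def by (smt (verit))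
      then have "norm (t n - S (t n)) * norm (S (t n) - S c) \<le> norm (t n - S (t n)) * (M + norm (S c))"
        by (rule mult_left_mono) simp
      then have i2: "(t n - S (t n)) \<bullet> (S (t n) - S c) \<le> norm (t n - S (t n)) * (M + norm (S c))"
        using inner_le_norms[of "t n - S (t n)" "S (t n) - S c"] by linarith
      have "(norm (t n - S c))\<^sup>2 = (norm ((t n - S (t n)) + (S (t n) - S c)))\<^sup>2" by simp
      also have "\<dots> = (norm (t n - S (t n)))\<^sup>2 + (norm (S (t n) - S c))\<^sup>2 + 2 * ((t n - S (t n)) \<bullet> (S (t n) - S c))"
        by (rule sq_expand)
      finally show "(norm (t n - S c))\<^sup>2 \<le> (norm (t n - c))\<^sup>2 +
       ((norm (t n - S (t n)))\<^sup>2 + norm (t n - S (t n)) * norm (c - S c) + 2 * norm (t n - S (t n)) * (M + norm (S c)))"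
        using h i1 i2 by linarith
    qed
  qed
  then have Sc: "S c = c" by (rule center_unique[OF Ms(2) ct])
  have fz: "f z c \<le> 0" if zE: "z \<in> E" for z
  proof (rule field_le_epsilon)
    fix \<epsilon> :: real assume e: "0 < \<epsilon>"
    let ?K = "{w\<in>E. f z w \<le> \<epsilon>}"
    have ev: "eventually (\<lambda>n. t n \<in> ?K) sequentially"
      using eventually_subseq[OF \<sigma> fEP[OF zE e]] tE by (auto simp: t_def elim: eventually_mono)
    then obtain N where "\<And>n. n \<ge> N \<Longrightarrow> t n \<in> ?K" unfolding eventually_sequentially by blast
    then have ne: "?K \<noteq> {}" by blast
    have "c \<in> ?K"
      by (rule center_in[OF Ms(2) ct sublevel_closed[OF E(2) bc(5)[OF f zE]] sublevel_convex[OF bc(4)[OF f zE]] ne ev])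
    then show "f z c \<le> 0 + \<epsilon>" by simp
  qed
  have "c \<in> EP E f" unfolding EP_char[OF f E(3)] using cE fz by blast
  then show ?thesis unfolding FF_def fixset_def using cE Sc by auto
qed

end



context setting begin

lemma psisub:
  assumes \<sigma>: "strict_mono \<sigma>" and z: "z \<in> FF"
  shows "psi (\<lambda>n. x (\<sigma> n)) z = psi x z"
proof -
  obtain L where L: "(\<lambda>n. (norm (x n - z))\<^sup>2) \<longlonglongrightarrow> L" using Dlim[OF z] by blast
  have "(\<lambda>n. (norm (x (\<sigma> n) - z))\<^sup>2) \<longlonglongrightarrow> L" using LIMSEQ_subseq_LIMSEQ[OF L \<sigma>] by (simp add: o_def)
  then show ?thesis unfolding psi_def using LS_lim L by metis
qed

lemma main: "\<exists>v\<in>FF. weakly_conv x v \<and> ((\<lambda>n. metric_proj FF (x n)) \<longlonglongrightarrow> v)"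
proof -
  obtain M where M: "bseqv x M" "bseqv u M" "bseqv (\<lambda>n. S (u n)) M" by (rule bounds)
  obtain c0 where c0: "\<forall>z. psi x c0 \<le> psi x z" using center_exists[OF M(1)] by blast
  have id: "strict_mono (\<lambda>n::nat. n)" by (simp add: strict_mono_def)
  have c0F: "c0 \<in> FF" using center_FF[OF id] c0 by simp
  have c0sub: "\<forall>z. psi (\<lambda>n. x (\<sigma> n)) c0 \<le> psi (\<lambda>n. x (\<sigma> n)) z" if \<sigma>: "strict_mono \<sigma>" for \<sigma>
  proof
    fix z
    have Ms: "bseqv (\<lambda>n. x (\<sigma> n)) M" using M(1) by (simp add: bseqv_def)
    obtain c' where c': "\<forall>z. psi (\<lambda>n. x (\<sigma> n)) c' \<le> psi (\<lambda>n. x (\<sigma> n)) z" using center_exists[OF Ms] by blast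
    have c'F: "c' \<in> FF" by (rule center_FF[OF \<sigma> c'])
    have "psi (\<lambda>n. x (\<sigma> n)) c0 = psi x c0" by (rule psisub[OF \<sigma> c0F])
    also have "\<dots> \<le> psi x c'" using c0 by blast
    also have "\<dots> = psi (\<lambda>n. x (\<sigma> n)) c'" by (rule psisub[OF \<sigma> c'F, symmetric])
    also have "\<dots> \<le> psi (\<lambda>n. x (\<sigma> n)) z" using c' by blast
    finally show "psi (\<lambda>n. x (\<sigma> n)) c0 \<le> psi (\<lambda>n. x (\<sigma> n)) z" .
  qed
  have weak0: "(\<lambda>n. (x n - c0) \<bullet> w) \<longlonglongrightarrow> 0" for w
  proof (rule weak_from_subseq)
    have "\<bar>(x n - c0) \<bullet> w\<bar> \<le> (M + norm c0) * norm w" for n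
    proof -
      have "\<bar>(x n - c0) \<bullet> w\<bar> \<le> norm (x n - c0) * norm w" by (rule Cauchy_Schwarz_ineq2)
      also have "norm (x n - c0) \<le> M + norm c0"
        using M(1) norm_triangle_ineq4[of "x n" c0] unfolding bseqv_def by (smt (verit))
      then have "norm (x n - c0) * norm w \<le> (M + norm c0) * norm w" by (rule mult_right_mono) simp
      finally show ?thesis .
    qed
    then show "bdd (\<lambda>n. (x n - c0) \<bullet> w)" unfolding bdd_def by blast
  next
    fix r l assume r: "strict_mono r" and l: "((\<lambda>n. (x n - c0) \<bullet> w) \<circ> r) \<longlonglongrightarrow> l"
    have Ms: "bseqv (\<lambda>n. x (r n)) M" using M(1) by (simp add: bseqv_def)
    have l': "(\<lambda>n. (x (r n) - c0) \<bullet> w) \<longlonglongrightarrow> l" using l by (simp add: o_def)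
    show "l = 0" by (rule center_weak[OF Ms c0sub[OF r] l'])
  qed
  have wc: "weakly_conv x c0" unfolding weakly_conv_def
  proof
    fix w
    have "(\<lambda>n. (x n - c0) \<bullet> w + c0 \<bullet> w) \<longlonglongrightarrow> 0 + c0 \<bullet> w" by (intro tendsto_intros weak0)
    then show "(\<lambda>n. x n \<bullet> w) \<longlonglongrightarrow> c0 \<bullet> w" by (simp add: inner_diff_left)
  qed
  define P where "P n = metric_proj FF (x n)" for n
  have PF: "P n \<in> FF" for n unfolding P_def by (rule metric_proj_props(1)[OF FF_props(1-3)])
  have Pmin: "\<forall>z\<in>FF. norm (x n - P n) \<le> norm (x n - z)" for n
    unfolding P_def using metric_proj_props(2)[OF FF_props(1-3)] by blast
  define d where "d n = norm (x n - P n)" for n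
  have key: "(norm (P n - P m))\<^sup>2 + (d m)\<^sup>2 \<le> (d n)\<^sup>2" if nm: "n \<le> m" for n m
  proof -
    have "(norm (P n - P m))\<^sup>2 + (norm (x m - P m))\<^sup>2 \<le> (norm (P n - x m))\<^sup>2"
      by (rule proj_pyth[OF FF_props(2) PF Pmin PF])
    moreover have "norm (P n - x m) \<le> d n"
      unfolding d_def using fejer_mono[OF PF nm] by (simp add: norm_minus_commute)
    then have "(norm (P n - x m))\<^sup>2 \<le> (d n)\<^sup>2" by (simp add: power_mono)
    ultimately show ?thesis unfolding d_def by linarith
  qed
  have dec: "decseq (\<lambda>n. (d n)\<^sup>2)"
    by (rule decseq_SucI) (use key[of n "Suc n" for n] in \<open>smt (verit) le_add2 plus_1_eq_Suc zero_le_power2\<close>)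
  have nn: "\<forall>i. 0 \<le> (d i)\<^sup>2" by simp
  obtain D where D: "(\<lambda>n. (d n)\<^sup>2) \<longlonglongrightarrow> D" using decseq_convergent[OF dec nn] by blast
  have "Cauchy P"
  proof (rule metric_CauchyI)
    fix e :: real assume e: "e > 0"
    have "Cauchy (\<lambda>n. (d n)\<^sup>2)" using D by (rule LIMSEQ_imp_Cauchy)
    then obtain N where N: "\<And>m n. m \<ge> N \<Longrightarrow> n \<ge> N \<Longrightarrow> dist ((d m)\<^sup>2) ((d n)\<^sup>2) < e\<^sup>2"
      using e unfolding Cauchy_def by (meson zero_less_power)
    have "dist (P m) (P n) < e" if "m \<ge> N" "n \<ge> N" for m n
    proof -
      have "(norm (P m - P n))\<^sup>2 < e\<^sup>2"
      proof (cases "m \<le> n")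
        case True
        then show ?thesis using key[OF True] N[OF that] by (simp add: dist_real_def)
      next
        case False
        then have nm: "n \<le> m" by simp
        show ?thesis using key[OF nm] N[OF that] by (simp add: dist_real_def norm_minus_commute)
      qed
      then show ?thesis using e by (simp add: dist_norm power_less_imp_less_base)
    qed
    then show "\<exists>M. \<forall>m\<ge>M. \<forall>n\<ge>M. dist (P m) (P n) < e" by blast
  qed
  then obtain v where Pv: "P \<longlonglongrightarrow> v" using Cauchy_convergent_iff convergent_def by blast
  have vF: "v \<in> FF" using FF_props(1) PF Pv closed_sequential_limits by blast
  have ch: "(x n - P n) \<bullet> (c0 - P n) \<le> 0" for n by (rule proj_char[OF FF_props(2) PF Pmin c0F])
  have split: "(x n - P n) \<bullet> (c0 - P n) = (x n - c0) \<bullet> (c0 - v) + (x n - c0) \<bullet> (v - P n) + (norm (c0 - P n))\<^sup>2" for n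
  proof -
    have "x n - P n = (x n - c0) + (c0 - P n)" by simp
    then have "(x n - P n) \<bullet> (c0 - P n) = (x n - c0) \<bullet> (c0 - P n) + (c0 - P n) \<bullet> (c0 - P n)"
      by (metis inner_add_left)
    also have "c0 - P n = (c0 - v) + (v - P n)" by simp
    then have "(x n - c0) \<bullet> (c0 - P n) = (x n - c0) \<bullet> (c0 - v) + (x n - c0) \<bullet> (v - P n)"
      by (metis inner_add_right)
    finally show ?thesis by (simp add: power2_norm_eq_inner)
  qed
  have t1: "(\<lambda>n. (x n - c0) \<bullet> (c0 - v)) \<longlonglongrightarrow> 0" by (rule weak0)
  have t2: "(\<lambda>n. (x n - c0) \<bullet> (v - P n)) \<longlonglongrightarrow> 0"
  proof (rule real_tendsto_sandwich[where f="\<lambda>n. - ((M + norm c0) * norm (v - P n))" and h="\<lambda>n. (M + norm c0) * norm (v - P n)"])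
    have "(\<lambda>n. norm (v - P n)) \<longlonglongrightarrow> norm (v - v)" by (intro tendsto_intros Pv)
    then have nv: "(\<lambda>n. norm (v - P n)) \<longlonglongrightarrow> 0" by simp
    have b: "\<bar>(x n - c0) \<bullet> (v - P n)\<bar> \<le> (M + norm c0) * norm (v - P n)" for n
    proof -
      have "\<bar>(x n - c0) \<bullet> (v - P n)\<bar> \<le> norm (x n - c0) * norm (v - P n)" by (rule Cauchy_Schwarz_ineq2)
      also have "norm (x n - c0) \<le> M + norm c0"
        using M(1) norm_triangle_ineq4[of "x n" c0] unfolding bseqv_def by (smt (verit))
      then have "norm (x n - c0) * norm (v - P n) \<le> (M + norm c0) * norm (v - P n)" by (rule mult_right_mono) simp
      finally show ?thesis .
    qed
    have b2: "- ((M + norm c0) * norm (v - P n)) \<le> (x n - c0) \<bullet> (v - P n)" for n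
      using b[of n] by linarith
    show "\<forall>\<^sub>F n in sequentially. - ((M + norm c0) * norm (v - P n)) \<le> (x n - c0) \<bullet> (v - P n)"
      using b2 by simp
    show "\<forall>\<^sub>F n in sequentially. (x n - c0) \<bullet> (v - P n) \<le> (M + norm c0) * norm (v - P n)"
      using b by (auto simp: abs_le_iff)
    show "(\<lambda>n. - ((M + norm c0) * norm (v - P n))) \<longlonglongrightarrow> 0"
      using tendsto_minus[OF tendsto_mult[OF tendsto_const nv, of "M + norm c0"]] by simp
    show "(\<lambda>n. (M + norm c0) * norm (v - P n)) \<longlonglongrightarrow> 0"
      using tendsto_mult[OF tendsto_const nv, of "M + norm c0"] by simp
  qed
  have t3: "(\<lambda>n. (norm (c0 - P n))\<^sup>2) \<longlonglongrightarrow> (norm (c0 - v))\<^sup>2" by (intro tendsto_intros Pv)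
  have "(\<lambda>n. (x n - P n) \<bullet> (c0 - P n)) \<longlonglongrightarrow> 0 + 0 + (norm (c0 - v))\<^sup>2"
    unfolding split by (intro tendsto_add t1 t2 t3)
  then have "(norm (c0 - v))\<^sup>2 \<le> 0" using ch by (intro LIMSEQ_le_const2) auto
  then have "v = c0" by simp
  then show ?thesis using c0F wc Pv unfolding P_def by blast
qed

end

theorem theorem3p4:
  fixes E :: "'a::{real_inner, complete_space} set"
    and f :: "'a \<Rightarrow> 'a \<Rightarrow> real"
    and S :: "'a \<Rightarrow> 'a"
    and \<alpha>s \<beta>s r :: "nat \<Rightarrow> real"
    and a b :: real
    and x0 :: 'a
    and x u y :: "nat \<Rightarrow> 'a"
  assumes E: "E \<noteq> {}" "closed E" "convex E"
    and f: "bifun_conds E f"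
    and S: "hybrid E S"
    and nonempty: "fixset E S \<inter> EP E f \<noteq> {}"
    and alpha: "a > 0" "\<forall>n. a \<le> \<alpha>s n \<and> \<alpha>s n \<le> 1"
    and r_pos: "\<forall>n. r n > 0"
    and r_liminf: "liminf (\<lambda>n. ereal (r n)) > 0"
    and b: "0 < b" "b < 1"
    and beta: "\<forall>n. b \<le> \<beta>s n \<and> \<beta>s n \<le> 1"
    and beta_liminf: "liminf (\<lambda>n. ereal (\<beta>s n * (1 - \<beta>s n))) > 0"
    and x0: "x0 \<in> E" "x 0 = x0"
    and u: "\<forall>n. u n \<in> E \<and> (\<forall>z\<in>E. f (u n) z + (1 / r n) * ((z - u n) \<bullet> (u n - x n)) \<ge> 0)"
    and y: "\<forall>n. y n = (1 - \<beta>s n) *\<^sub>R x n + \<beta>s n *\<^sub>R S (u n)"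
    and x: "\<forall>n. x (Suc n) = (1 - \<alpha>s n) *\<^sub>R x n + \<alpha>s n *\<^sub>R S (y n)"
  shows "\<exists>v \<in> fixset E S \<inter> EP E f. weakly_conv x v \<and>
           ((\<lambda>n. metric_proj (fixset E S \<inter> EP E f) (x n)) \<longlonglongrightarrow> v)"
  proof -
  interpret setting E f S \<alpha>s \<beta>s r a b x0 x u y
    using assms by (simp add: setting_def)
  show ?thesis using main unfolding FF_def .
qed

end
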